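(* Let $(G,X)$ be a self-similar group with $|X|\ge1$. Then the Boolean inverse monoid $\mathcal G_{\mathrm{tight}}(S^{=}_{G,X})^a$ has exactly one normalized invariant mean $\mu$, namely the one determined on cylinder sets by $\mu(C(\alpha))=|X|^{-|\alpha|}$ for $\alpha\in X^*$ (and extended additively to clopen subsets of $X^\omega$, each of which is a finite disjoint union of cylinders).
   Context: $X$ is a finite set, $X^*$ the finite words over $X$ (including the empty word), $|\alpha|$ the length of $\alpha$, $X^\omega$ the Cantor space of infinite words, $C(\alpha)=\{\alpha x:x\in X^\omega\}$. A self-similar group $(G,X)$: a faithful length-preserving action of a group $G$ on $X^*$ with, for each $g,x$, a unique $g|_x\in G$ such that $g\cdot(x\alpha)=(g\cdot x)(g|_x\cdot\alpha)$; restrictions extend to words and the action extends to $X^\omega$ by $g\cdot(x_1x_2\cdots)=(g\cdot x_1)(g|_{x_1}\cdot x_2)(g|_{x_1x_2}\cdot x_3)\cdots$. $S_{G,X}=\{(\alpha,g,\beta)\}\cup\{0\}$ with $(\alpha,g,\beta)^*=(\beta,g^{-1},\alpha)$ and product $(\alpha,g,\beta)(\gamma,h,\nu)$ equal to $(\alpha(g\cdot\gamma'),g|_{\gamma'}h,\nu)$ if $\gamma=\beta\gamma'$, $(\alpha,g(h^{-1}|_{\beta'})^{-1},\nu(h^{-1}\cdot\beta'))$ if $\beta=\gamma\beta'$, and $0$ otherwise. $S^{=}_{G,X}=\{(\alpha,g,\beta)\in S_{G,X}:|\alpha|=|\beta|\}\cup\{0\}$ is an inverse submonoid with idempotents $(\alpha,1,\alpha)$.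 Its tight groupoid $\mathcal G_{\mathrm{tight}}(S^{=}_{G,X})$ has unit space $X^\omega$ and consists of germs $[(\alpha,g,\beta),\beta x]$ with $d=\beta x$ and $r=\alpha(g\cdot x)$, where $[s,x]=[t,x]$ iff $se=te$ for some idempotent $e=(\delta,1,\delta)$ with $x\in C(\delta)$; its topology is generated by the sets $\{[s,y]:y\in U\}$, $U$ open in the domain of $s$. $\mathcal G_{\mathrm{tight}}(S^{=}_{G,X})^a$ is the Boolean inverse monoid of compact open bisections (under setwise product and inverse); its idempotents are the clopen subsets of $X^\omega$. A normalized invariant mean on a Boolean inverse monoid $S$ is $\mu:E(S)\to[0,\infty)$ with $\mu(1)=1$, $\mu(s^*s)=\mu(ss^* )$ for all $s$, and $\mu(e\vee f)=\mu(e)+\mu(f)$ when $ef=0$. *)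

theory Defs
  imports "HOL-Analysis.Analysis" "HOL-Algebra.Group" "HOL-Library.Sublist"
begin

(* Alphabet X = UNIV of a finite type 'x; X^* = 'x list; X^omega = nat => 'x.
   A self-similar group: a HOL-Algebra group G, an action act on finite words
   and restrictions res g x = g|_x. *)

type_synonym ('g,'x) elt = "('x list \<times> 'g \<times> 'x list) option"
  (* None = 0, Some (alpha,g,beta) = (alpha,g,beta) *)

definition self_similar ::
  "('g,'b) monoid_scheme \<Rightarrow> ('g \<Rightarrow> 'x list \<Rightarrow> 'x list) \<Rightarrow> ('g \<Rightarrow> 'x \<Rightarrow> 'g) \<Rightarrow> bool" where
  "self_similar G act res \<longleftrightarrow>
     group G \<and>
     (\<forall>w. act \<one>\<^bsub>G\<^esub> w = w) \<and>
     (\<forall>g\<in>carrier G. \<forall>h\<in>carrier G. \<forall>w. act (g \<otimes>\<^bsub>G\<^esub> h) w = act g (act h w)) \<and>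
     (\<forall>g\<in>carrier G. \<forall>w. length (act g w) = length w) \<and>
     (\<forall>g\<in>carrier G. \<forall>h\<in>carrier G. (\<forall>w. act g w = act h w) \<longrightarrow> g = h) \<and>
     (\<forall>g\<in>carrier G. \<forall>x. res g x \<in> carrier G) \<and>
     (\<forall>g\<in>carrier G. \<forall>x w. act g (x # w) = act g [x] @ act (res g x) w)"

fun resw :: "('g \<Rightarrow> 'x \<Rightarrow> 'g) \<Rightarrow> 'g \<Rightarrow> 'x list \<Rightarrow> 'g" where
  "resw res g [] = g"
| "resw res g (x # a) = resw res (res g x) a"

definition omega_act ::
  "('g \<Rightarrow> 'x list \<Rightarrow> 'x list) \<Rightarrow> ('g \<Rightarrow> 'x \<Rightarrow> 'g) \<Rightarrow> 'g \<Rightarrow> (nat \<Rightarrow> 'x) \<Rightarrow> (nat \<Rightarrow> 'x)" where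
  "omega_act act res g x = (\<lambda>n. hd (act (resw res g (map x [0..<n])) [x n]))"

definition prepend :: "'x list \<Rightarrow> (nat \<Rightarrow> 'x) \<Rightarrow> (nat \<Rightarrow> 'x)" where
  "prepend a x = (\<lambda>n. if n < length a then a ! n else x (n - length a))"

definition shift :: "nat \<Rightarrow> (nat \<Rightarrow> 'x) \<Rightarrow> (nat \<Rightarrow> 'x)" where
  "shift k x = (\<lambda>n. x (n + k))"

definition cyl :: "'x list \<Rightarrow> (nat \<Rightarrow> 'x) set" where
  "cyl a = {x. \<forall>i<length a. x i = a ! i}"

(* product topology of the discrete topology on X^omega *)
definition cantor_top :: "(nat \<Rightarrow> 'x) topology" where
  "cantor_top = topology_generated_by (range cyl)"

definition clopen :: "(nat \<Rightarrow> 'x) set \<Rightarrow> bool" where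
  "clopen E \<longleftrightarrow> openin cantor_top E \<and> closedin cantor_top E"

definition smult ::
  "('g,'b) monoid_scheme \<Rightarrow> ('g \<Rightarrow> 'x list \<Rightarrow> 'x list) \<Rightarrow> ('g \<Rightarrow> 'x \<Rightarrow> 'g)
    \<Rightarrow> ('g,'x) elt \<Rightarrow> ('g,'x) elt \<Rightarrow> ('g,'x) elt" where
  "smult G act res s t =
     (case (s, t) of
        (Some (a, g, b), Some (c, h, v)) \<Rightarrow>
          if prefix b c then
            (let c' = drop (length b) c in
              Some (a @ act g c', resw res g c' \<otimes>\<^bsub>G\<^esub> h, v))
          else if prefix c b then
            (let b' = drop (length c) b in
              Some (a, g \<otimes>\<^bsub>G\<^esub> inv\<^bsub>G\<^esub> (resw res (inv\<^bsub>G\<^esub> h) b'),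
                    v @ act (inv\<^bsub>G\<^esub> h) b'))
          else None
      | _ \<Rightarrow> None)"

definition Seq :: "('g,'b) monoid_scheme \<Rightarrow> ('g,'x) elt set" where
  "Seq G = insert None {Some (a, g, b) | a g b. g \<in> carrier G \<and> length a = length b}"

definition idem :: "('g,'b) monoid_scheme \<Rightarrow> 'x list \<Rightarrow> ('g,'x) elt" where
  "idem G d = Some (d, \<one>\<^bsub>G\<^esub>, d)"

definition sdom :: "('g,'x) elt \<Rightarrow> (nat \<Rightarrow> 'x) set" where
  "sdom s = (case s of None \<Rightarrow> {} | Some (a, g, b) \<Rightarrow> cyl b)"

definition srng ::
  "('g \<Rightarrow> 'x list \<Rightarrow> 'x list) \<Rightarrow> ('g \<Rightarrow> 'x \<Rightarrow> 'g) \<Rightarrow> ('g,'x) elt \<Rightarrow> (nat \<Rightarrow> 'x) \<Rightarrow> (nat \<Rightarrow> 'x)" where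
  "srng act res s y = (case s of None \<Rightarrow> y
      | Some (a, g, b) \<Rightarrow> prepend a (omega_act act res g (shift (length b) y)))"

type_synonym ('g,'x) germ = "(('g,'x) elt \<times> (nat \<Rightarrow> 'x)) set"

(* the germ [s,y], as the equivalence class of the pair (s,y) *)
definition germ ::
  "('g,'b) monoid_scheme \<Rightarrow> ('g \<Rightarrow> 'x list \<Rightarrow> 'x list) \<Rightarrow> ('g \<Rightarrow> 'x \<Rightarrow> 'g)
    \<Rightarrow> ('g,'x) elt \<Rightarrow> (nat \<Rightarrow> 'x) \<Rightarrow> ('g,'x) germ" where
  "germ G act res s y =
     {(t, y) | t. t \<in> Seq G \<and> t \<noteq> None \<and> y \<in> sdom t \<and>
        (\<exists>d. y \<in> cyl d \<and> smult G act res s (idem G d) = smult G act res t (idem G d))}"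

definition tight_groupoid ::
  "('g,'b) monoid_scheme \<Rightarrow> ('g \<Rightarrow> 'x list \<Rightarrow> 'x list) \<Rightarrow> ('g \<Rightarrow> 'x \<Rightarrow> 'g) \<Rightarrow> ('g,'x) germ set" where
  "tight_groupoid G act res =
     {germ G act res s y | s y. s \<in> Seq G \<and> s \<noteq> None \<and> y \<in> sdom s}"

definition groupoid_top ::
  "('g,'b) monoid_scheme \<Rightarrow> ('g \<Rightarrow> 'x list \<Rightarrow> 'x list) \<Rightarrow> ('g \<Rightarrow> 'x \<Rightarrow> 'g) \<Rightarrow> ('g,'x) germ topology" where
  "groupoid_top G act res = topology_generated_by
     {(\<lambda>y. germ G act res s y) ` U | s U. s \<in> Seq G \<and> s \<noteq> None \<and>
        openin cantor_top U \<and> U \<subseteq> sdom s}"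

definition gdom :: "('g,'x) germ \<Rightarrow> (nat \<Rightarrow> 'x)" where
  "gdom \<gamma> = (THE y. \<exists>s. (s, y) \<in> \<gamma>)"

definition grng ::
  "('g \<Rightarrow> 'x list \<Rightarrow> 'x list) \<Rightarrow> ('g \<Rightarrow> 'x \<Rightarrow> 'g) \<Rightarrow> ('g,'x) germ \<Rightarrow> (nat \<Rightarrow> 'x)" where
  "grng act res \<gamma> = (THE z. \<exists>s y. (s, y) \<in> \<gamma> \<and> z = srng act res s y)"

(* elements of the Boolean inverse monoid G_tight(S^=)^a: compact open bisections *)
definition compact_open_bisection ::
  "('g,'b) monoid_scheme \<Rightarrow> ('g \<Rightarrow> 'x list \<Rightarrow> 'x list) \<Rightarrow> ('g \<Rightarrow> 'x \<Rightarrow> 'g) \<Rightarrow> ('g,'x) germ set \<Rightarrow> bool" where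
  "compact_open_bisection G act res B \<longleftrightarrow>
     B \<subseteq> tight_groupoid G act res \<and>
     openin (groupoid_top G act res) B \<and> compactin (groupoid_top G act res) B \<and>
     inj_on gdom B \<and> inj_on (grng act res) B"

(* normalized invariant mean on G_tight(S^=)^a; its idempotents are the clopen
   subsets of X^omega, with s^*s = d(s) and s s^* = r(s), 1 = X^omega,
   e f = 0 iff disjoint, e \<or> f = union *)
definition normalized_invariant_mean ::
  "('g,'b) monoid_scheme \<Rightarrow> ('g \<Rightarrow> 'x list \<Rightarrow> 'x list) \<Rightarrow> ('g \<Rightarrow> 'x \<Rightarrow> 'g)
    \<Rightarrow> ((nat \<Rightarrow> 'x) set \<Rightarrow> real) \<Rightarrow> bool" where
  "normalized_invariant_mean G act res \<mu> \<longleftrightarrow>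
     (\<forall>E. clopen E \<longrightarrow> \<mu> E \<ge> 0) \<and>
     \<mu> UNIV = 1 \<and>
     (\<forall>B. compact_open_bisection G act res B \<longrightarrow> \<mu> (gdom ` B) = \<mu> (grng act res ` B)) \<and>
     (\<forall>E F. clopen E \<longrightarrow> clopen F \<longrightarrow> E \<inter> F = {} \<longrightarrow> \<mu> (E \<union> F) = \<mu> E + \<mu> F)"

end

theory Submission
  imports Defs
begin


definition pre :: "(nat \<Rightarrow> 'x) \<Rightarrow> nat \<Rightarrow> 'x list" where
  "pre y n = map y [0..<n]"

lemma length_pre[simp]: "length (pre y n) = n" by (simp add: pre_def)

lemma pre_nth[simp]: "i < n \<Longrightarrow> pre y n ! i = y i" by (simp add: pre_def)

lemma pre_Suc: "pre y (Suc n) = pre y n @ [y n]" by (simp add: pre_def)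

lemma pre_add: "pre y (m + n) = pre y m @ pre (\<lambda>i. y (i + m)) n"
  by (rule nth_equalityI) (auto simp: nth_append add.commute)

lemma cyl_iff: "y \<in> cyl w \<longleftrightarrow> pre y (length w) = w"
  by (auto simp: cyl_def list_eq_iff_nth_eq)

lemma in_cyl_pre[simp]: "y \<in> cyl (pre y n)"
  by (simp add: cyl_iff)

lemma cyl_append_sub: "cyl (w @ v) \<subseteq> cyl w"
  by (auto simp: cyl_def nth_append)

lemma pre_take: "m \<le> n \<Longrightarrow> take m (pre y n) = pre y m"
  by (simp add: pre_def take_map)

lemma cyl_pre_mono: "m \<le> n \<Longrightarrow> cyl (pre y n) \<subseteq> cyl (pre y m)"
  by (auto simp: cyl_def)

lemma cyl_nonempty: "cyl w \<noteq> {}"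
proof -
  have "(\<lambda>i. if i < length w then w ! i else undefined) \<in> cyl w" by (simp add: cyl_def)
  then show ?thesis by blast
qed

lemma cyl_same_length_eq: "y \<in> cyl w \<Longrightarrow> y \<in> cyl u \<Longrightarrow> length w = length u \<Longrightarrow> w = u"
  by (metis cyl_iff)

lemma cyl_nil[simp]: "cyl [] = UNIV" by (simp add: cyl_def)

lemma cyl_prefix_of_sub: "y \<in> cyl c \<Longrightarrow> length c \<le> n \<Longrightarrow> cyl (pre y n) \<subseteq> cyl c"
  by (metis cyl_iff cyl_pre_mono)

lemma fan:
  fixes P :: "('x::finite) list \<Rightarrow> bool"
  assumes mono: "\<And>w v. P w \<Longrightarrow> P (w @ v)"
    and all: "\<And>y::nat\<Rightarrow>'x. \<exists>n. P (pre y n)"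
  shows "\<exists>N. \<forall>w. length w = N \<longrightarrow> P w"
proof -
  define good where "good w \<longleftrightarrow> (\<exists>k. \<forall>v. length v \<ge> k \<longrightarrow> P (w @ v))" for w
  have step: "\<exists>c. \<not> good (w @ [c])" if ng: "\<not> good w" for w
  proof (rule ccontr)
    assume "\<nexists>c. \<not> good (w @ [c])"
    then have "\<forall>c. \<exists>k. \<forall>v. length v \<ge> k \<longrightarrow> P (w @ [c] @ v)" by (simp add: good_def)
    then obtain k where k: "\<And>c v. length v \<ge> k c \<Longrightarrow> P (w @ [c] @ v)" by metis
    define K where "K = Max (range k)"
    have kK: "k c \<le> K" for c unfolding K_def by (simp add: Max_ge)
    have "P (w @ v)" if lv: "length v \<ge> Suc K" for v
    proof -
      from lv obtain c v' where v: "v = c # v'" by (cases v) auto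
      have "length v' \<ge> k c" using that kK[of c] v by simp
      then show ?thesis using k[of c v'] v by simp
    qed
    then have "good w" unfolding good_def by blast
    with ng show False by simp
  qed
  have "good []"
  proof (rule ccontr)
    assume ng0: "\<not> good []"
    define nx where "nx w = (SOME c. \<not> good (w @ [c]))" for w
    have nx: "\<not> good w \<Longrightarrow> \<not> good (w @ [nx w])" for w
      unfolding nx_def by (rule someI_ex) (rule step)
    define f where "f = rec_nat [] (\<lambda>n w. w @ [nx w])"
    have f0: "f 0 = []" and fS: "f (Suc n) = f n @ [nx (f n)]" for n by (simp_all add: f_def)
    have ngf: "\<not> good (f n)" for n by (induction n) (use ng0 nx in \<open>auto simp: f0 fS\<close>)
    have lenf: "length (f n) = n" for n by (induction n) (auto simp: f0 fS)
    have pref: "take m (f n) = f m" if "m \<le> n" for m n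
      using that
    proof (induction n)
      case 0 then show ?case by (simp add: f0)
    next
      case (Suc n)
      then show ?case
        by (cases "m = Suc n") (auto simp: fS lenf le_Suc_eq)
    qed
    define y where "y i = f (Suc i) ! i" for i
    have "pre y n = f n" for n
    proof (rule nth_equalityI)
      show "length (pre y n) = length (f n)" by (simp add: lenf)
      fix i assume "i < length (pre y n)"
      then have i: "i < n" by simp
      have "f (Suc i) = take (Suc i) (f n)" using pref[of "Suc i" n] i by simp
      then show "pre y n ! i = f n ! i" using i by (simp add: y_def)
    qed
    moreover obtain n where "P (pre y n)" using all by blast
    ultimately have "good (f n)" unfolding good_def using mono by auto
    with ngf show False by simp
  qed
  then obtain k where k: "\<And>v. length v \<ge> k \<Longrightarrow> P v" unfolding good_def by auto
  then show ?thesis by (intro exI[of _ k]) auto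
qed

definition det :: "nat \<Rightarrow> (nat \<Rightarrow> 'x) set \<Rightarrow> bool" where
  "det N E \<longleftrightarrow> (\<forall>y\<in>E. cyl (pre y N) \<subseteq> E)"

definition W :: "nat \<Rightarrow> (nat \<Rightarrow> 'x) set \<Rightarrow> 'x list set" where
  "W N E = {w. length w = N \<and> cyl w \<subseteq> E}"

definition mu :: "(nat \<Rightarrow> ('x::finite)) set \<Rightarrow> real" where
  "mu E = (if \<exists>N. det N E then real (card (W (LEAST N. det N E) E)) / real CARD('x) ^ (LEAST N. det N E) else 0)"

lemma finite_W[simp]: "finite (W N (E :: (nat \<Rightarrow> ('x::finite)) set))"
proof -
  have "W N E \<subseteq> {w. length w = N}" by (auto simp: W_def)
  moreover have "finite {w::'x list. length w = N}"
    using finite_lists_length_eq[of "UNIV::'x set" N] by simp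
  ultimately show ?thesis by (rule finite_subset)
qed

lemma det_Suc: "det N E \<Longrightarrow> det (Suc N) E"
proof -
  assume d: "det N E"
  have "\<And>y. cyl (pre y (Suc N)) \<subseteq> cyl (pre y N)" by (rule cyl_pre_mono) simp
  with d show ?thesis unfolding det_def by blast
qed

lemma det_mono': "N \<le> M \<Longrightarrow> det N E \<Longrightarrow> det M E"
proof (induction M rule: dec_induct)
  case base then show ?case by simp
next
  case (step n) then show ?case using det_Suc by blast
qed

lemma det_mono: "det N E \<Longrightarrow> N \<le> M \<Longrightarrow> det M E"
  using det_mono' by blast

lemma W_Suc:
  assumes "det N E"
  shows "W (Suc N) E = (\<lambda>(w,c). w @ [c]) ` (W N E \<times> UNIV)"
proof
  show "(\<lambda>(w,c). w @ [c]) ` (W N E \<times> UNIV) \<subseteq> W (Suc N) E"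
    using cyl_append_sub by (fastforce simp: W_def)
next
  show "W (Suc N) E \<subseteq> (\<lambda>(w,c). w @ [c]) ` (W N E \<times> UNIV)"
  proof
    fix u assume u: "u \<in> W (Suc N) E"
    then have lu: "length u = Suc N" and cu: "cyl u \<subseteq> E" by (auto simp: W_def)
    obtain y where y: "y \<in> cyl u" using cyl_nonempty by blast
    then have py: "pre y (Suc N) = u" using lu by (simp add: cyl_iff)
    have "y \<in> E" using y cu by auto
    then have "cyl (pre y N) \<subseteq> E" using assms by (auto simp: det_def)
    then have "pre y N \<in> W N E" by (simp add: W_def)
    moreover have "u = pre y N @ [y N]" using py pre_Suc by metis
    ultimately show "u \<in> (\<lambda>(w,c). w @ [c]) ` (W N E \<times> UNIV)" by force
  qed
qed

lemma card_W_Suc: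
  assumes "det N (E :: (nat \<Rightarrow> ('x::finite)) set)"
  shows "card (W (Suc N) E) = card (W N E) * CARD('x)"
proof -
  have "inj_on (\<lambda>(w,c). w @ [c]) (W N E \<times> (UNIV::'x set))"
    by (auto simp: inj_on_def)
  then have "card ((\<lambda>(w,c). w @ [c]) ` (W N E \<times> (UNIV::'x set))) = card (W N E \<times> (UNIV::'x set))"
    by (rule card_image)
  then show ?thesis using W_Suc[OF assms] by (simp add: card_cartesian_product)
qed

lemma ratio_add:
  assumes "det N (E :: (nat \<Rightarrow> ('x::finite)) set)"
  shows "real (card (W (N + k) E)) / real CARD('x) ^ (N + k) = real (card (W N E)) / real CARD('x) ^ N"
proof (induction k)
  case 0 then show ?case by simp
next
  case (Suc k)
  have d: "det (N + k) E" using det_mono[OF assms] by simp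
  have c: "real CARD('x) > 0" by simp
  have "real (card (W (N + Suc k) E)) / real CARD('x) ^ (N + Suc k)
      = real (card (W (N + k) E)) * real CARD('x) / (real CARD('x) ^ (N + k) * real CARD('x))"
    using card_W_Suc[OF d] by simp
  also have "\<dots> = real (card (W (N + k) E)) / real CARD('x) ^ (N + k)"
    using c by (simp add: field_simps)
  finally show ?case using Suc by simp
qed

lemma mu_eq:
  assumes "det N (E :: (nat \<Rightarrow> ('x::finite)) set)"
  shows "mu E = real (card (W N E)) / real CARD('x) ^ N"
proof -
  define L where "L = (LEAST N. det N E)"
  have dL: "det L E" unfolding L_def using assms by (rule LeastI)
  have LN: "L \<le> N" unfolding L_def using assms by (rule Least_le)
  have "mu E = real (card (W L E)) / real CARD('x) ^ L"
    unfolding mu_def L_def using assms by auto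
  also have "\<dots> = real (card (W (L + (N - L)) E)) / real CARD('x) ^ (L + (N - L))"
    using ratio_add[OF dL] by simp
  finally show ?thesis using LN by simp
qed

lemma det_union_W: assumes "det N E" shows "E = \<Union> (cyl ` W N E)"
proof (intro equalityI subsetI)
  fix x assume x: "x \<in> E"
  then have "pre x N \<in> W N E" using assms by (auto simp: det_def W_def)
  then show "x \<in> \<Union> (cyl ` W N E)" using in_cyl_pre[of x N] by blast
qed (auto simp: W_def)

lemma det_compl: assumes "det N E" shows "det N (- E)"
  unfolding det_def
proof (intro ballI subsetI)
  fix y y' assume y: "y \<in> - E" and y': "y' \<in> cyl (pre y N)"
  show "y' \<in> - E"
  proof
    assume "y' \<in> E"
    then have "cyl (pre y' N) \<subseteq> E" using assms by (auto simp: det_def)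
    moreover have "pre y' N = pre y N" using y' by (simp add: cyl_iff)
    ultimately have "y \<in> E" using in_cyl_pre[of y N] by auto
    with y show False by simp
  qed
qed

lemma det_Un: "det N E \<Longrightarrow> det N F \<Longrightarrow> det N (E \<union> F)"
  unfolding det_def by blast

lemma det_cyl: "length w \<le> N \<Longrightarrow> det N (cyl w)"
  unfolding det_def using cyl_prefix_of_sub by blast

lemma det_UNIV: "det N UNIV" by (simp add: det_def)

lemma W_Un:
  assumes "det N E" "det N F" "E \<inter> F = {}"
  shows "W N (E \<union> F) = W N E \<union> W N F" "W N E \<inter> W N F = {}"
proof -
  show "W N E \<inter> W N F = {}"
  proof (rule ccontr)
    assume "W N E \<inter> W N F \<noteq> {}"
    then obtain w where "cyl w \<subseteq> E" "cyl w \<subseteq> F" by (auto simp: W_def)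
    then show False using assms(3) cyl_nonempty[of w] by blast
  qed
  show "W N (E \<union> F) = W N E \<union> W N F"
  proof
    show "W N E \<union> W N F \<subseteq> W N (E \<union> F)" by (auto simp: W_def)
    show "W N (E \<union> F) \<subseteq> W N E \<union> W N F"
    proof
      fix w assume w: "w \<in> W N (E \<union> F)"
      obtain y where y: "y \<in> cyl w" using cyl_nonempty by blast
      have pw: "pre y N = w" using y w by (simp add: W_def cyl_iff)
      have "y \<in> E \<union> F" using w y by (auto simp: W_def)
      then show "w \<in> W N E \<union> W N F"
        using assms(1,2) pw w by (auto simp: det_def W_def)
    qed
  qed
qed

lemma mu_add:
  assumes "det N (E :: (nat \<Rightarrow> ('x::finite)) set)" "det N F" "E \<inter> F = {}"
  shows "mu (E \<union> F) = mu E + mu F"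
proof -
  have "card (W N (E \<union> F)) = card (W N E) + card (W N F)"
    using W_Un[OF assms] by (simp add: card_Un_disjoint)
  then show ?thesis
    using mu_eq[OF assms(1)] mu_eq[OF assms(2)] mu_eq[OF det_Un[OF assms(1,2)]]
    by (simp add: add_divide_distrib)
qed

lemma mu_cyl: "mu (cyl (a :: ('x::finite) list)) = inverse (real CARD('x) ^ length a)"
proof -
  have "W (length a) (cyl a) = {a}"
  proof (intro equalityI subsetI)
    fix w assume "w \<in> W (length a) (cyl a)"
    then have lw: "length w = length a" and c: "cyl w \<subseteq> cyl a" by (auto simp: W_def)
    obtain y where y: "y \<in> cyl w" using cyl_nonempty by blast
    then show "w \<in> {a}" using c lw cyl_same_length_eq[of y w a] by auto
  qed (auto simp: W_def)
  then show ?thesis using mu_eq[OF det_cyl[of a "length a"]] by (simp add: field_simps)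
qed

lemma mu_UNIV: "mu (UNIV :: (nat \<Rightarrow> ('x::finite)) set) = 1"
proof -
  have "W 0 (UNIV :: (nat \<Rightarrow> 'x) set) = {[]}" by (auto simp: W_def)
  then have c: "card (W 0 (UNIV :: (nat \<Rightarrow> 'x) set)) = 1" by simp
  have "mu (UNIV :: (nat \<Rightarrow> 'x) set) = real (card (W 0 (UNIV :: (nat \<Rightarrow> 'x) set))) / real CARD('x) ^ 0"
    by (rule mu_eq[OF det_UNIV])
  then show ?thesis using c by simp
qed

lemma mu_nonneg: "mu E \<ge> 0"
  unfolding mu_def by simp

lemma topspace_cantor[simp]: "topspace cantor_top = UNIV"
proof -
  have "UNIV \<in> range (cyl :: 'x list \<Rightarrow> _)" using rangeI[of cyl "[]::'x list"] by simp
  then have "\<Union> (range cyl) = (UNIV :: (nat \<Rightarrow> 'x) set)" by auto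
  then show ?thesis unfolding cantor_top_def topology_generated_by_topspace .
qed

lemma openin_cantor_nbhd:
  assumes "openin cantor_top U" "y \<in> U"
  shows "\<exists>n. cyl (pre y n) \<subseteq> U"
proof -
  have "generate_topology_on (range cyl) U"
    using assms(1) unfolding cantor_top_def by (rule openin_topology_generated_by)
  then show ?thesis using assms(2)
  proof (induction arbitrary: y)
    case Empty then show ?case by simp
  next
    case (Int a b)
    then obtain n m where "cyl (pre y n) \<subseteq> a" "cyl (pre y m) \<subseteq> b" by blast
    then have "cyl (pre y (max n m)) \<subseteq> a \<inter> b"
      using cyl_pre_mono[of n "max n m" y] cyl_pre_mono[of m "max n m" y] by auto
    then show ?case by blast
  next
    case (UN K) then show ?case by blast
  next
    case (Basis s)
    then obtain w where "s = cyl w" by auto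
    then have "cyl (pre y (length w)) \<subseteq> s" using Basis.prems by (simp add: cyl_iff)
    then show ?case by blast
  qed
qed

lemma openin_cantor_cyl: "openin cantor_top (cyl w)"
  unfolding cantor_top_def by (rule openin_topology_generated_by_iff[THEN iffD2]) (auto intro: generate_topology_on.Basis)

lemma openin_cantor_det: "det N E \<Longrightarrow> openin cantor_top E"
proof -
  assume d: "det N E"
  have "E = \<Union> (cyl ` W N E)" using det_union_W[OF d] .
  moreover have "openin cantor_top (\<Union> (cyl ` W N E))"
    by (rule openin_Union) (auto intro: openin_cantor_cyl)
  ultimately show ?thesis by simp
qed

lemma clopen_det: assumes "det N E" shows "clopen E"
proof -
  have "openin cantor_top (- E)" using openin_cantor_det[OF det_compl[OF assms]] .
  then have "closedin cantor_top E" unfolding closedin_def by (simp add: Compl_eq_Diff_UNIV)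
  then show ?thesis unfolding clopen_def using openin_cantor_det[OF assms] by simp
qed

lemma clopen_imp_det:
  fixes E :: "(nat \<Rightarrow> ('x::finite)) set"
  assumes "clopen E"
  shows "\<exists>N. det N E"
proof -
  have oE: "openin cantor_top E" and oC: "openin cantor_top (- E)"
    using assms unfolding clopen_def closedin_def by (auto simp: Compl_eq_Diff_UNIV)
  have "\<exists>N. \<forall>w::'x list. length w = N \<longrightarrow> (cyl w \<subseteq> E \<or> cyl w \<subseteq> - E)"
  proof (rule fan)
    fix w v :: "'x list"
    assume "cyl w \<subseteq> E \<or> cyl w \<subseteq> - E"
    then show "cyl (w @ v) \<subseteq> E \<or> cyl (w @ v) \<subseteq> - E" using cyl_append_sub[of w v] by blast
  next
    fix y :: "nat \<Rightarrow> 'x"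
    show "\<exists>n. cyl (pre y n) \<subseteq> E \<or> cyl (pre y n) \<subseteq> - E"
    proof (cases "y \<in> E")
      case True
      then obtain n where "cyl (pre y n) \<subseteq> E" using openin_cantor_nbhd[OF oE] by blast
      then show ?thesis by blast
    next
      case False
      then obtain n where "cyl (pre y n) \<subseteq> - E" using openin_cantor_nbhd[OF oC] by blast
      then show ?thesis by blast
    qed
  qed
  then obtain N where N: "\<And>w::'x list. length w = N \<Longrightarrow> cyl w \<subseteq> E \<or> cyl w \<subseteq> - E" by blast
  have "det N E" unfolding det_def
  proof
    fix y
    assume yE: "y \<in> E"
    have "cyl (pre y N) \<subseteq> E \<or> cyl (pre y N) \<subseteq> - E" using N[of "pre y N"] by simp
    moreover have "y \<in> cyl (pre y N)" by simp
    ultimately show "cyl (pre y N) \<subseteq> E" using yE by blast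
  qed
  then show ?thesis by blast
qed




lemma seq_eq_pre: assumes h: "\<And>n. pre y (k + n) = pre z (k + n)" shows "y = z"
proof
  fix i
  have "pre y (k + Suc i) ! i = pre z (k + Suc i) ! i" by (simp only: h)
  then show "y i = z i" by simp
qed

lemma pre_prepend: "pre (prepend w z) (length w + n) = w @ pre z n"
  by (rule nth_equalityI) (auto simp: prepend_def nth_append)

lemma pre_prepend_le: "m \<le> length w \<Longrightarrow> pre (prepend w z) m = take m w"
  by (rule nth_equalityI) (auto simp: prepend_def)

lemma shift_prepend[simp]: "shift (length w) (prepend w z) = z"
  by (auto simp: shift_def prepend_def)

lemma prepend_prepend: "prepend a (prepend u z) = prepend (a @ u) z"
  by (auto simp: prepend_def nth_append fun_eq_iff)

lemma prepend_in_cyl: "prepend w z \<in> cyl w"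
  by (auto simp: prepend_def cyl_def)

lemma prepend_shift_cyl: "y \<in> cyl w \<Longrightarrow> prepend w (shift (length w) y) = y"
  by (auto simp: prepend_def shift_def cyl_def fun_eq_iff)

lemma pre_shift: "pre (shift k y) n = drop k (pre y (k + n))"
  by (rule nth_equalityI) (auto simp: shift_def add.commute)

lemma pre_split: "k \<le> m \<Longrightarrow> pre y m = pre y k @ drop k (pre y m)"
  by (metis append_take_drop_id pre_take)

lemma shift_split: "k \<le> m \<Longrightarrow> shift k y = prepend (drop k (pre y m)) (shift m y)"
  by (auto simp: prepend_def shift_def fun_eq_iff add.commute)

lemma prefix_pre_iff: "prefix (pre y m) (pre y n) \<longleftrightarrow> m \<le> n"
proof
  assume "prefix (pre y m) (pre y n)"
  then show "m \<le> n" using prefix_length_le by fastforce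
next
  assume "m \<le> n"
  then show "prefix (pre y m) (pre y n)" using pre_split[of m n y] by (metis prefixI)
qed

lemma cyl_pre_eq: "y \<in> cyl b \<Longrightarrow> b = pre y (length b)"
  by (simp add: cyl_iff)

locale ssg =
  fixes G :: "('g,'b) monoid_scheme"
    and act :: "'g \<Rightarrow> ('x::finite) list \<Rightarrow> 'x list"
    and res :: "'g \<Rightarrow> 'x \<Rightarrow> 'g"
  assumes ss: "self_similar G act res"
begin

lemmas ssc = ss[unfolded self_similar_def]
lemma grp: "group G" using ssc by (rule conjunct1)
lemma act_one[simp]: "act \<one>\<^bsub>G\<^esub> w = w"
proof -
  have "\<forall>w. act \<one>\<^bsub>G\<^esub> w = w" using ssc[THEN conjunct2, THEN conjunct1] .
  then show ?thesis by blast
qed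
lemma act_mult: assumes "g \<in> carrier G" "h \<in> carrier G" shows "act (g \<otimes>\<^bsub>G\<^esub> h) w = act g (act h w)"
proof -
  have "\<forall>g\<in>carrier G. \<forall>h\<in>carrier G. \<forall>w. act (g \<otimes>\<^bsub>G\<^esub> h) w = act g (act h w)"
    using ssc[THEN conjunct2, THEN conjunct2, THEN conjunct1] .
  then show ?thesis using assms by blast
qed
lemma act_len[simp]: assumes "g \<in> carrier G" shows "length (act g w) = length w"
proof -
  have "\<forall>g\<in>carrier G. \<forall>w. length (act g w) = length w"
    using ssc[THEN conjunct2, THEN conjunct2, THEN conjunct2, THEN conjunct1] .
  then show ?thesis using assms by blast
qed
lemma faithful: assumes "g \<in> carrier G" "h \<in> carrier G" "\<And>w. act g w = act h w" shows "g = h"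
proof -
  have f: "\<forall>g\<in>carrier G. \<forall>h\<in>carrier G. (\<forall>w. act g w = act h w) \<longrightarrow> g = h"
    using ssc[THEN conjunct2, THEN conjunct2, THEN conjunct2, THEN conjunct2, THEN conjunct1] .
  have "\<forall>w. act g w = act h w" using assms(3) by blast
  then show ?thesis using f assms(1,2) by blast
qed
lemma res_closed: assumes "g \<in> carrier G" shows "res g x \<in> carrier G"
proof -
  have "\<forall>g\<in>carrier G. \<forall>x. res g x \<in> carrier G"
    using ssc[THEN conjunct2, THEN conjunct2, THEN conjunct2, THEN conjunct2, THEN conjunct2, THEN conjunct1] .
  then show ?thesis using assms by blast
qed
lemma act_cons: assumes "g \<in> carrier G" shows "act g (x # w) = act g [x] @ act (res g x) w"
proof -
  have "\<forall>g\<in>carrier G. \<forall>x w. act g (x # w) = act g [x] @ act (res g x) w"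
    using ssc[THEN conjunct2, THEN conjunct2, THEN conjunct2, THEN conjunct2, THEN conjunct2, THEN conjunct2] .
  then show ?thesis using assms by blast
qed

lemma one_closed[simp]: "\<one>\<^bsub>G\<^esub> \<in> carrier G" using grp by (simp add: group.is_monoid monoid.one_closed)
lemma inv_closed[simp]: "g \<in> carrier G \<Longrightarrow> inv\<^bsub>G\<^esub> g \<in> carrier G" using grp by (simp add: group.inv_closed)
lemma inv_one[simp]: "inv\<^bsub>G\<^esub> \<one>\<^bsub>G\<^esub> = \<one>\<^bsub>G\<^esub>" using grp by (simp add: group.is_monoid monoid.inv_one)
lemma r_one[simp]: "g \<in> carrier G \<Longrightarrow> g \<otimes>\<^bsub>G\<^esub> \<one>\<^bsub>G\<^esub> = g" using grp by (simp add: group.is_monoid monoid.r_one)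
lemma l_inv[simp]: "g \<in> carrier G \<Longrightarrow> inv\<^bsub>G\<^esub> g \<otimes>\<^bsub>G\<^esub> g = \<one>\<^bsub>G\<^esub>" using grp by (simp add: group.l_inv)
lemma r_inv[simp]: "g \<in> carrier G \<Longrightarrow> g \<otimes>\<^bsub>G\<^esub> inv\<^bsub>G\<^esub> g = \<one>\<^bsub>G\<^esub>" using grp by (simp add: group.r_inv)

lemma resw_closed[simp]: "g \<in> carrier G \<Longrightarrow> resw res g w \<in> carrier G"
  by (induction w arbitrary: g) (auto simp: res_closed)

lemma act_nil[simp]: assumes "g \<in> carrier G" shows "act g [] = []"
proof -
  have "length (act g []) = 0" using assms by simp
  then show ?thesis by simp
qed

lemma act_append: "g \<in> carrier G \<Longrightarrow> act g (u @ v) = act g u @ act (resw res g u) v"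
proof (induction u arbitrary: g)
  case Nil then show ?case by simp
next
  case (Cons x u)
  have "act g ((x # u) @ v) = act g [x] @ act (res g x) (u @ v)" using act_cons[OF Cons.prems, of x "u @ v"] by simp
  also have "\<dots> = act g [x] @ act (res g x) u @ act (resw res (res g x) u) v"
    using Cons.IH res_closed Cons.prems by simp
  also have "\<dots> = act g (x # u) @ act (resw res g (x # u)) v"
    using act_cons[OF Cons.prems, of x u] by simp
  finally show ?case .
qed

lemma resw_append: "resw res g (u @ v) = resw res (resw res g u) v"
  by (induction u arbitrary: g) auto

lemma res_one[simp]: "res \<one>\<^bsub>G\<^esub> x = \<one>\<^bsub>G\<^esub>"
proof (rule faithful)
  show "res \<one>\<^bsub>G\<^esub> x \<in> carrier G" by (simp add: res_closed)
  fix w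
  have "x # w = [x] @ act (res \<one>\<^bsub>G\<^esub> x) w" using act_cons[of "\<one>\<^bsub>G\<^esub>" x w] by simp
  then show "act (res \<one>\<^bsub>G\<^esub> x) w = act \<one>\<^bsub>G\<^esub> w" by simp
qed simp

lemma resw_one[simp]: "resw res \<one>\<^bsub>G\<^esub> w = \<one>\<^bsub>G\<^esub>"
  by (induction w) auto

lemma act_single: assumes "g \<in> carrier G" shows "act g [x] = [hd (act g [x])]"
proof -
  have "length (act g [x]) = 1" using assms by simp
  then show ?thesis by (cases "act g [x]") auto
qed

lemma act_inv_left: "g \<in> carrier G \<Longrightarrow> act (inv\<^bsub>G\<^esub> g) (act g w) = w"
  using act_mult[of "inv\<^bsub>G\<^esub> g" g w] by simp

lemma act_inv_right: "g \<in> carrier G \<Longrightarrow> act g (act (inv\<^bsub>G\<^esub> g) w) = w"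
  using act_mult[of g "inv\<^bsub>G\<^esub> g" w] by simp

lemma act_inj: "g \<in> carrier G \<Longrightarrow> act g u = act g v \<Longrightarrow> u = v"
  by (metis act_inv_left)

abbreviation om where "om \<equiv> omega_act act res"

lemma pre_omega: "g \<in> carrier G \<Longrightarrow> pre (om g y) n = act g (pre y n)"
proof (induction n)
  case 0 then show ?case by (simp add: pre_def)
next
  case (Suc n)
  have "act g (pre y (Suc n)) = act g (pre y n) @ act (resw res g (pre y n)) [y n]"
    using act_append[OF Suc.prems] by (simp add: pre_Suc)
  also have "\<dots> = act g (pre y n) @ [hd (act (resw res g (pre y n)) [y n])]"
    using act_single[of "resw res g (pre y n)" "y n"] Suc.prems by simp
  finally show ?case using Suc by (simp add: pre_Suc omega_act_def pre_def)
qed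

lemma omega_prepend:
  assumes g: "g \<in> carrier G"
  shows "om g (prepend w z) = prepend (act g w) (om (resw res g w) z)"
proof (rule seq_eq_pre[where k = "length w"])
  fix n
  have "pre (om g (prepend w z)) (length w + n) = act g w @ act (resw res g w) (pre z n)"
    using g by (simp add: pre_omega pre_prepend act_append)
  also have "\<dots> = pre (prepend (act g w) (om (resw res g w) z)) (length w + n)"
    using pre_prepend[of "act g w" "om (resw res g w) z" n] g by (simp add: pre_omega)
  finally show "pre (om g (prepend w z)) (length w + n) = pre (prepend (act g w) (om (resw res g w) z)) (length w + n)" .
qed

lemma omega_one[simp]: "om \<one>\<^bsub>G\<^esub> z = z"
  by (rule seq_eq_pre[where k = 0]) (simp add: pre_omega)

lemma omega_surj:
  assumes g: "g \<in> carrier G"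
  shows "\<exists>y. om g y = z"
proof -
  define h where "h = inv\<^bsub>G\<^esub> g"
  have h: "h \<in> carrier G" using g by (simp add: h_def)
  define y where "y i = act h (pre z (Suc i)) ! i" for i
  have py: "pre y n = act h (pre z n)" for n
  proof (rule nth_equalityI)
    show "length (pre y n) = length (act h (pre z n))" using h by simp
    fix i assume "i < length (pre y n)"
    then have i: "i < n" by simp
    have "pre z n = pre z (Suc i) @ drop (Suc i) (pre z n)" using i pre_split[of "Suc i" n z] by simp
    then have "act h (pre z n) = act h (pre z (Suc i)) @ act (resw res h (pre z (Suc i))) (drop (Suc i) (pre z n))"
      using act_append[OF h] by metis
    then have "act h (pre z n) ! i = act h (pre z (Suc i)) ! i"
      using h by (simp add: nth_append)
    then show "pre y n ! i = act h (pre z n) ! i" using i by (simp add: y_def)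
  qed
  have "om g y = z"
    by (rule seq_eq_pre[where k = 0]) (simp add: pre_omega g py act_inv_right h_def)
  then show ?thesis by blast
qed

end




context ssg
begin

abbreviation sm where "sm \<equiv> smult G act res"
abbreviation gm where "gm \<equiv> germ G act res"
abbreviation ide where "ide \<equiv> idem G"

lemma Seq_Some[simp]: "Some (a, g, b) \<in> Seq G \<longleftrightarrow> g \<in> carrier G \<and> length a = length b"
  by (auto simp: Seq_def)

lemma Seq_cases:
  assumes "s \<in> Seq G" "s \<noteq> None"
  obtains a g b where "s = Some (a, g, b)" "g \<in> carrier G" "length a = length b"
  using assms by (auto simp: Seq_def)

lemma sdom_Some[simp]: "sdom (Some (a, g, b)) = cyl b"
  by (simp add: sdom_def)

lemma srng_Some: "srng act res (Some (a, g, b)) y = prepend a (om g (shift (length b) y))"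
  by (simp add: srng_def)

lemma smult_idem_raw:
  "sm (Some (a, g, b)) (ide d) =
    (if prefix b d then Some (a @ act g (drop (length b) d), resw res g (drop (length b) d) \<otimes>\<^bsub>G\<^esub> \<one>\<^bsub>G\<^esub>, d)
     else if prefix d b then Some (a, g \<otimes>\<^bsub>G\<^esub> inv\<^bsub>G\<^esub> (resw res (inv\<^bsub>G\<^esub> \<one>\<^bsub>G\<^esub>) (drop (length d) b)),
                               d @ act (inv\<^bsub>G\<^esub> \<one>\<^bsub>G\<^esub>) (drop (length d) b))
     else None)"
  by (simp add: smult_def idem_def Let_def)

lemma sm_idem_le:
  assumes g: "g \<in> carrier G" and yb: "y \<in> cyl b" and yd: "y \<in> cyl d" and le: "length b \<le> length d"
  shows "sm (Some (a, g, b)) (ide d) = Some (a @ act g (drop (length b) d), resw res g (drop (length b) d), d)"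
proof -
  have "prefix b d" using yb yd le prefix_pre_iff cyl_pre_eq by metis
  then show ?thesis using g by (simp add: smult_idem_raw)
qed

lemma sm_idem_gt:
  assumes g: "g \<in> carrier G" and yb: "y \<in> cyl b" and yd: "y \<in> cyl d" and lt: "length d < length b"
  shows "sm (Some (a, g, b)) (ide d) = Some (a, g, b)"
proof -
  have np: "\<not> prefix b d" using lt prefix_length_le by fastforce
  have p: "prefix d b" using yb yd lt prefix_pre_iff cyl_pre_eq less_imp_le by metis
  then obtain c where c: "b = d @ c" by (auto simp: prefix_def)
  show ?thesis using g np p c by (simp add: smult_idem_raw)
qed

lemma drop_pre_split:
  assumes "j \<le> k" "k \<le> m"
  shows "drop j (pre y m) = drop j (pre y k) @ drop k (pre y m)"
proof -
  have "pre y m = pre y k @ drop k (pre y m)" using assms(2) by (rule pre_split)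
  then have "drop j (pre y m) = drop j (pre y k @ drop k (pre y m))" by simp
  also have "\<dots> = drop j (pre y k) @ drop k (pre y m)" using assms(1) by simp
  finally show ?thesis .
qed

lemma srng_sm_Some:
  assumes g: "g \<in> carrier G" and len: "length a = length b" and yb: "y \<in> cyl b" and yd: "y \<in> cyl d"
  shows "srng act res (sm (Some (a, g, b)) (ide d)) y = srng act res (Some (a, g, b)) y"
    "sm (Some (a, g, b)) (ide d) \<in> Seq G" "sm (Some (a, g, b)) (ide d) \<noteq> None"
proof -
  have "srng act res (sm (Some (a, g, b)) (ide d)) y = srng act res (Some (a, g, b)) y \<and>
        sm (Some (a, g, b)) (ide d) \<in> Seq G \<and> sm (Some (a, g, b)) (ide d) \<noteq> None"
  proof (cases "length b \<le> length d")
    case True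
    define d1 where "d1 = drop (length b) d"
    have e: "sm (Some (a, g, b)) (ide d) = Some (a @ act g d1, resw res g d1, d)"
      using sm_idem_le[OF g yb yd True] by (simp add: d1_def)
    have dpre: "d = pre y (length d)" using yd by (rule cyl_pre_eq)
    have sh: "shift (length b) y = prepend d1 (shift (length d) y)"
      using shift_split[OF True, of y] dpre d1_def by simp
    have "srng act res (Some (a, g, b)) y = prepend a (om g (prepend d1 (shift (length d) y)))"
      by (simp add: srng_Some sh)
    also have "\<dots> = prepend (a @ act g d1) (om (resw res g d1) (shift (length d) y))"
      using g by (simp add: omega_prepend prepend_prepend)
    also have "\<dots> = srng act res (sm (Some (a, g, b)) (ide d)) y"
      by (simp add: e srng_Some)
    finally have 1: "srng act res (sm (Some (a, g, b)) (ide d)) y = srng act res (Some (a, g, b)) y" by simp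
    have "length (a @ act g d1) = length d" using g len True by (simp add: d1_def)
    then show ?thesis using 1 e g by simp
  next
    case False
    then show ?thesis using sm_idem_gt[OF g yb yd] g len by simp
  qed
  then show "srng act res (sm (Some (a, g, b)) (ide d)) y = srng act res (Some (a, g, b)) y"
    "sm (Some (a, g, b)) (ide d) \<in> Seq G" "sm (Some (a, g, b)) (ide d) \<noteq> None" by auto
qed

lemma srng_sm:
  assumes "s \<in> Seq G" "s \<noteq> None" "y \<in> sdom s" "y \<in> cyl d"
  shows "srng act res (sm s (ide d)) y = srng act res s y"
proof -
  obtain a g b where s: "s = Some (a, g, b)" "g \<in> carrier G" "length a = length b"
    using assms(1,2) by (rule Seq_cases)
  show ?thesis using srng_sm_Some(1)[OF s(2,3), of y d] assms(3,4) s(1) by simp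
qed

lemma sm_assoc_Some:
  assumes g: "g \<in> carrier G" and yb: "y \<in> cyl b" and km: "k \<le> m"
  shows "sm (sm (Some (a, g, b)) (ide (pre y k))) (ide (pre y m)) = sm (Some (a, g, b)) (ide (pre y m))"
proof (cases "length b \<le> k")
  case True
  define d1 where "d1 = drop (length b) (pre y k)"
  define d2 where "d2 = drop k (pre y m)"
  have e1: "sm (Some (a, g, b)) (ide (pre y k)) = Some (a @ act g d1, resw res g d1, pre y k)"
    using sm_idem_le[OF g yb in_cyl_pre[of y k]] True by (simp add: d1_def)
  have g1: "resw res g d1 \<in> carrier G" using g by simp
  have e2: "sm (Some (a @ act g d1, resw res g d1, pre y k)) (ide (pre y m))
      = Some (a @ act g d1 @ act (resw res g d1) d2, resw res (resw res g d1) d2, pre y m)"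
    using sm_idem_le[OF g1 in_cyl_pre[of y k] in_cyl_pre[of y m]] km by (simp add: d2_def)
  have e3: "sm (Some (a, g, b)) (ide (pre y m)) = Some (a @ act g (d1 @ d2), resw res g (d1 @ d2), pre y m)"
    using sm_idem_le[OF g yb in_cyl_pre[of y m]] True km drop_pre_split[OF True km, of y]
    by (simp add: d1_def d2_def)
  show ?thesis using e1 e2 e3 g by (simp add: act_append resw_append)
next
  case False
  then show ?thesis using sm_idem_gt[OF g yb in_cyl_pre[of y k]] by simp
qed

lemma sm_assoc:
  assumes "s \<in> Seq G" "s \<noteq> None" "y \<in> sdom s" "k \<le> m"
  shows "sm (sm s (ide (pre y k))) (ide (pre y m)) = sm s (ide (pre y m))"
proof -
  obtain a g b where s: "s = Some (a, g, b)" "g \<in> carrier G" "length a = length b"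
    using assms(1,2) by (rule Seq_cases)
  show ?thesis using sm_assoc_Some[OF s(2), of y b k m a] assms(3,4) s(1) by simp
qed

lemma germ_self:
  assumes "s \<in> Seq G" "s \<noteq> None" "y \<in> sdom s"
  shows "(s, y) \<in> gm s y"
  using assms unfolding germ_def by (auto intro!: exI[of _ "[]"])

lemma germ_memD:
  assumes "(t, z) \<in> gm s y"
  shows "z = y" "t \<in> Seq G" "t \<noteq> None" "y \<in> sdom t"
    "\<exists>d. y \<in> cyl d \<and> sm s (ide d) = sm t (ide d)"
  using assms unfolding germ_def by auto

lemma germ_sub:
  assumes s: "s \<in> Seq G" "s \<noteq> None" "y \<in> sdom s"
    and t: "t \<in> Seq G" "t \<noteq> None" "y \<in> sdom t"
    and d: "y \<in> cyl d" "sm s (ide d) = sm t (ide d)"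
  shows "gm s y \<subseteq> gm t y"
proof
  fix p assume p: "p \<in> gm s y"
  obtain r z where pr: "p = (r, z)" by (cases p)
  have z: "z = y" and r: "r \<in> Seq G" "r \<noteq> None" "y \<in> sdom r"
    using germ_memD[of r z s y] p pr by auto
  obtain d' where d': "y \<in> cyl d'" "sm s (ide d') = sm r (ide d')"
    using germ_memD(5)[of r z s y] p pr by auto
  define m where "m = max (length d) (length d')"
  have dd: "d = pre y (length d)" using d(1) by (rule cyl_pre_eq)
  have dd': "d' = pre y (length d')" using d'(1) by (rule cyl_pre_eq)
  have "sm t (ide (pre y m)) = sm (sm t (ide d)) (ide (pre y m))"
    using sm_assoc[OF t, of "length d" m] dd by (simp add: m_def)
  also have "\<dots> = sm (sm s (ide d)) (ide (pre y m))" using d(2) by simp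
  also have "\<dots> = sm s (ide (pre y m))"
    using sm_assoc[OF s, of "length d" m] dd by (simp add: m_def)
  also have "\<dots> = sm (sm s (ide d')) (ide (pre y m))"
    using sm_assoc[OF s, of "length d'" m] dd' by (simp add: m_def)
  also have "\<dots> = sm (sm r (ide d')) (ide (pre y m))" using d'(2) by simp
  also have "\<dots> = sm r (ide (pre y m))"
    using sm_assoc[OF r, of "length d'" m] dd' by (simp add: m_def)
  finally have "sm t (ide (pre y m)) = sm r (ide (pre y m))" .
  then show "p \<in> gm t y" using pr z r unfolding germ_def by (auto intro!: exI[of _ "pre y m"])
qed

lemma germ_eq:
  assumes s: "s \<in> Seq G" "s \<noteq> None" "y \<in> sdom s"
    and t: "t \<in> Seq G" "t \<noteq> None" "y \<in> sdom t"
    and d: "y \<in> cyl d" "sm s (ide d) = sm t (ide d)"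
  shows "gm s y = gm t y"
  using germ_sub[OF s t d] germ_sub[OF t s d(1) d(2)[symmetric]] by blast

lemma gdom_germ:
  assumes "s \<in> Seq G" "s \<noteq> None" "y \<in> sdom s"
  shows "gdom (gm s y) = y"
  unfolding gdom_def
proof (rule the_equality)
  show "\<exists>s'. (s', y) \<in> gm s y" using germ_self[OF assms] by blast
  fix z assume "\<exists>s'. (s', z) \<in> gm s y"
  then show "z = y" using germ_memD(1) by blast
qed

lemma srng_germ:
  assumes s: "s \<in> Seq G" "s \<noteq> None" "y \<in> sdom s" and t: "(t, z) \<in> gm s y"
  shows "srng act res t y = srng act res s y"
proof -
  have z: "z = y" "t \<in> Seq G" "t \<noteq> None" "y \<in> sdom t" using germ_memD[OF t] by auto
  obtain d where d: "y \<in> cyl d" "sm s (ide d) = sm t (ide d)" using germ_memD(5)[OF t] by blast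
  have "srng act res s y = srng act res (sm s (ide d)) y" using srng_sm[OF s d(1)] by simp
  also have "\<dots> = srng act res (sm t (ide d)) y" using d(2) by simp
  also have "\<dots> = srng act res t y" using srng_sm[OF z(2-4) d(1)] by simp
  finally show ?thesis by simp
qed

lemma grng_germ:
  assumes s: "s \<in> Seq G" "s \<noteq> None" "y \<in> sdom s"
  shows "grng act res (gm s y) = srng act res s y"
  unfolding grng_def
proof (rule the_equality)
  show "\<exists>s' y'. (s', y') \<in> gm s y \<and> srng act res s y = srng act res s' y'"
    using germ_self[OF s] by blast
  fix z assume "\<exists>s' y'. (s', y') \<in> gm s y \<and> z = srng act res s' y'"
  then obtain s' y' where h: "(s', y') \<in> gm s y" "z = srng act res s' y'" by blast
  have "y' = y" using germ_memD(1)[OF h(1)] .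
  then show "z = srng act res s y" using srng_germ[OF s] h by simp
qed

end




lemma det_Union: "(\<And>E. E \<in> \<E> \<Longrightarrow> det N E) \<Longrightarrow> det N (\<Union> \<E>)"
  unfolding det_def by blast

lemma cyl_transfer:
  assumes "y \<in> cyl w" "y' \<in> cyl w" "y \<in> cyl c" "length c \<le> length w"
  shows "y' \<in> cyl c"
  using assms unfolding cyl_def by auto

context ssg
begin

abbreviation gtop where "gtop \<equiv> groupoid_top G act res"

lemma germ_cont:
  assumes U: "openin gtop U" and s: "s \<in> Seq G" "s \<noteq> None" "y \<in> sdom s" and gU: "gm s y \<in> U"
  shows "\<exists>n. \<forall>y'\<in>cyl (pre y n). y' \<in> sdom s \<longrightarrow> gm s y' \<in> U"
proof -
  have "generate_topology_on
     {(\<lambda>y. germ G act res s y) ` U | s U. s \<in> Seq G \<and> s \<noteq> None \<and>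
        openin cantor_top U \<and> U \<subseteq> sdom s} U"
    using U unfolding groupoid_top_def by (rule openin_topology_generated_by)
  then show ?thesis using gU
  proof (induction)
    case Empty then show ?case by simp
  next
    case (Int a b)
    then obtain n1 n2 where n1: "\<forall>y'\<in>cyl (pre y n1). y' \<in> sdom s \<longrightarrow> gm s y' \<in> a"
      and n2: "\<forall>y'\<in>cyl (pre y n2). y' \<in> sdom s \<longrightarrow> gm s y' \<in> b" by auto
    have "cyl (pre y (max n1 n2)) \<subseteq> cyl (pre y n1)" "cyl (pre y (max n1 n2)) \<subseteq> cyl (pre y n2)"
      by (simp_all add: cyl_pre_mono)
    then have "\<forall>y'\<in>cyl (pre y (max n1 n2)). y' \<in> sdom s \<longrightarrow> gm s y' \<in> a \<inter> b" using n1 n2 by blast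
    then show ?case by blast
  next
    case (UN K)
    then obtain k where k: "k \<in> K" "gm s y \<in> k" by blast
    then obtain n where "\<forall>y'\<in>cyl (pre y n). y' \<in> sdom s \<longrightarrow> gm s y' \<in> k" using UN.IH by blast
    then show ?case using k by blast
  next
    case (Basis X)
    then obtain t V where X: "X = gm t ` V" and t: "t \<in> Seq G" "t \<noteq> None"
      and V: "openin cantor_top V" "V \<subseteq> sdom t" by blast
    obtain y0 where y0: "y0 \<in> V" "gm s y = gm t y0" using Basis.prems X by blast
    have sy: "(s, y) \<in> gm t y0" using germ_self[OF s] y0(2) by simp
    have yy0: "y = y0" using germ_memD(1)[OF sy] by simp
    obtain d where d: "y0 \<in> cyl d" "sm t (ide d) = sm s (ide d)" using germ_memD(5)[OF sy] by blast
    obtain n1 where n1: "cyl (pre y n1) \<subseteq> V" using openin_cantor_nbhd[OF V(1)] y0(1) yy0 by blast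
    define n where "n = max n1 (length d)"
    have dd: "d = pre y (length d)" using d(1) yy0 cyl_pre_eq by blast
    have "gm s y' \<in> X" if y': "y' \<in> cyl (pre y n)" "y' \<in> sdom s" for y'
    proof -
      have "y' \<in> V" using y' n1 cyl_pre_mono[of n1 n y] unfolding n_def by auto
      moreover have "y' \<in> cyl d" using y' cyl_pre_mono[of "length d" n y] dd unfolding n_def by auto
      ultimately have "gm s y' = gm t y'"
        using germ_eq[OF s(1,2) y'(2) t _ _ d(2)[symmetric]] V(2) by auto
      then show ?thesis using X \<open>y' \<in> V\<close> by blast
    qed
    then show ?case by blast
  qed
qed

definition slices where "slices = {gm s ` U | s U. s \<in> Seq G \<and> s \<noteq> None \<and>
        openin cantor_top U \<and> U \<subseteq> sdom s}"

lemma gtop_eq: "gtop = topology_generated_by slices"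
  unfolding groupoid_top_def slices_def by simp

lemma slice_open:
  assumes "s \<in> Seq G" "s \<noteq> None" "cyl c \<subseteq> sdom s"
  shows "openin gtop (gm s ` cyl c)"
proof -
  have "gm s ` cyl c \<in> slices" unfolding slices_def using assms openin_cantor_cyl by blast
  then show ?thesis unfolding gtop_eq by (rule openin_topology_generated_by_iff[THEN iffD2, OF generate_topology_on.Basis])
qed

lemma slice_compact:
  assumes s: "s \<in> Seq G" "s \<noteq> None" and c: "cyl c \<subseteq> sdom s"
  shows "compactin gtop (gm s ` cyl c)"
  unfolding compactin_def
proof (intro conjI allI impI)
  have "gm s ` cyl c \<in> slices" unfolding slices_def using s c openin_cantor_cyl by blast
  then show "gm s ` cyl c \<subseteq> topspace gtop" unfolding gtop_eq topology_generated_by_topspace by blast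
next
  fix \<U> assume h: "(\<forall>U\<in>\<U>. openin gtop U) \<and> gm s ` cyl c \<subseteq> \<Union> \<U>"
  then have op: "\<And>U. U \<in> \<U> \<Longrightarrow> openin gtop U" and cov: "gm s ` cyl c \<subseteq> \<Union> \<U>" by auto
  obtain yc where yc: "yc \<in> cyl c" using cyl_nonempty by blast
  then obtain U0 where U0: "U0 \<in> \<U>" using cov by blast
  define P where "P w \<longleftrightarrow> (\<exists>U\<in>\<U>. \<forall>y'\<in>cyl w \<inter> cyl c. gm s y' \<in> U)" for w :: "'x list"
  have "\<exists>N. \<forall>w::'x list. length w = N \<longrightarrow> P w"
  proof (rule fan)
    fix w v :: "'x list" assume "P w"
    then show "P (w @ v)" unfolding P_def using cyl_append_sub[of w v] by blast
  next
    fix y :: "nat \<Rightarrow> 'x"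
    show "\<exists>n. P (pre y n)"
    proof (cases "y \<in> cyl c")
      case True
      then obtain U where U: "U \<in> \<U>" "gm s y \<in> U" using cov by blast
      have ys: "y \<in> sdom s" using True c by blast
      obtain n where "\<forall>y'\<in>cyl (pre y n). y' \<in> sdom s \<longrightarrow> gm s y' \<in> U"
        using germ_cont[OF op[OF U(1)] s ys U(2)] by blast
      then have "P (pre y n)" unfolding P_def using U(1) c by blast
      then show ?thesis by blast
    next
      case False
      have "cyl (pre y (length c)) \<inter> cyl c = {}"
      proof (rule ccontr)
        assume "cyl (pre y (length c)) \<inter> cyl c \<noteq> {}"
        then obtain y' where "y' \<in> cyl (pre y (length c))" "y' \<in> cyl c" by blast
        then have "pre y (length c) = c" by (metis cyl_iff length_pre)
        then show False using False by (simp add: cyl_iff)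
      qed
      then have "P (pre y (length c))" unfolding P_def using U0 by blast
      then show ?thesis by blast
    qed
  qed
  then obtain N where N: "\<And>w::'x list. length w = N \<Longrightarrow> P w" by blast
  then have "\<forall>w\<in>{w::'x list. length w = N}. \<exists>U\<in>\<U>. \<forall>y'\<in>cyl w \<inter> cyl c. gm s y' \<in> U"
    unfolding P_def by blast
  then obtain F where F: "\<And>w. w \<in> {w::'x list. length w = N} \<Longrightarrow> F w \<in> \<U> \<and> (\<forall>y'\<in>cyl w \<inter> cyl c. gm s y' \<in> F w)"
    by metis
  have fin: "finite {w::'x list. length w = N}"
    using finite_lists_length_eq[of "UNIV::'x set" N] by simp
  show "\<exists>\<F>. finite \<F> \<and> \<F> \<subseteq> \<U> \<and> gm s ` cyl c \<subseteq> \<Union> \<F>"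
  proof (intro exI conjI)
    show "finite (F ` {w::'x list. length w = N})" using fin by simp
    show "F ` {w::'x list. length w = N} \<subseteq> \<U>" using F by blast
    show "gm s ` cyl c \<subseteq> \<Union> (F ` {w::'x list. length w = N})"
    proof
      fix \<gamma> assume "\<gamma> \<in> gm s ` cyl c"
      then obtain y where y: "y \<in> cyl c" "\<gamma> = gm s y" by blast
      have Fw: "F (pre y N) \<in> \<U> \<and> (\<forall>y'\<in>cyl (pre y N) \<inter> cyl c. gm s y' \<in> F (pre y N))"
        by (rule F) simp
      have yin: "y \<in> cyl (pre y N) \<inter> cyl c" using y(1) by simp
      have "gm s y \<in> F (pre y N)" using conjunct2[OF Fw] yin by (rule bspec)
      moreover have "pre y N \<in> {w::'x list. length w = N}" by simp
      ultimately show "\<gamma> \<in> \<Union> (F ` {w::'x list. length w = N})" unfolding y(2) by (rule UN_I[rotated])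
    qed
  qed
qed

lemma basic_bis:
  assumes len: "length a = length b"
  defines "B \<equiv> gm (Some (a, \<one>\<^bsub>G\<^esub>, b)) ` cyl b"
  shows "compact_open_bisection G act res B" "gdom ` B = cyl b" "grng act res ` B = cyl a"
proof -
  define s where "s = Some (a, \<one>\<^bsub>G\<^esub>, b)"
  have s: "s \<in> Seq G" "s \<noteq> None" "sdom s = cyl b" using len by (auto simp: s_def)
  have gd: "gdom (gm s y) = y" if "y \<in> cyl b" for y using gdom_germ[OF s(1,2)] s(3) that by simp
  have gr: "grng act res (gm s y) = prepend a (shift (length b) y)" if "y \<in> cyl b" for y
    using grng_germ[OF s(1,2)] s(3) that by (simp add: s_def srng_Some)
  have Bdef: "B = gm s ` cyl b" by (simp add: B_def s_def)
  show "gdom ` B = cyl b" unfolding Bdef image_image using gd by simp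
  have "grng act res ` B = (\<lambda>y. prepend a (shift (length b) y)) ` cyl b"
    unfolding Bdef image_image using gr by simp
  also have "\<dots> = cyl a"
  proof (intro equalityI subsetI)
    fix z assume "z \<in> (\<lambda>y. prepend a (shift (length b) y)) ` cyl b"
    then show "z \<in> cyl a" using prepend_in_cyl by blast
  next
    fix z assume z: "z \<in> cyl a"
    define y where "y = prepend b (shift (length a) z)"
    have "y \<in> cyl b" by (simp add: y_def prepend_in_cyl)
    moreover have "prepend a (shift (length b) y) = z"
      using prepend_shift_cyl[OF z] len by (simp add: y_def)
    ultimately show "z \<in> (\<lambda>y. prepend a (shift (length b) y)) ` cyl b" by blast
  qed
  finally show "grng act res ` B = cyl a" .
  show "compact_open_bisection G act res B"
    unfolding compact_open_bisection_def
  proof (intro conjI)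
    show "B \<subseteq> tight_groupoid G act res"
    proof
      fix \<gamma> assume "\<gamma> \<in> B"
      then obtain y where "y \<in> cyl b" "\<gamma> = gm s y" unfolding Bdef by blast
      then show "\<gamma> \<in> tight_groupoid G act res" unfolding tight_groupoid_def using s by blast
    qed
    show "openin gtop B" unfolding Bdef using slice_open[OF s(1,2)] s(3) by simp
    show "compactin gtop B" unfolding Bdef using slice_compact[OF s(1,2)] s(3) by simp
    show "inj_on gdom B" unfolding Bdef inj_on_def using gd by auto
    show "inj_on (grng act res) B" unfolding Bdef inj_on_def
    proof (intro ballI impI)
      fix g1 g2 assume g1: "g1 \<in> gm s ` cyl b" and g2: "g2 \<in> gm s ` cyl b"
        and eq: "grng act res g1 = grng act res g2"
      obtain y1 y2 where y: "y1 \<in> cyl b" "y2 \<in> cyl b" "g1 = gm s y1" "g2 = gm s y2" using g1 g2 by blast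
      have "prepend a (shift (length b) y1) = prepend a (shift (length b) y2)" using eq y gr by simp
      then have "shift (length a) (prepend a (shift (length b) y1)) = shift (length a) (prepend a (shift (length b) y2))" by simp
      then have "shift (length b) y1 = shift (length b) y2" by simp
      then have "y1 = y2" using prepend_shift_cyl[OF y(1)] prepend_shift_cyl[OF y(2)] by metis
      then show "g1 = g2" using y by simp
    qed
  qed
qed

end




context ssg
begin

definition pa :: "'x list \<times> 'g \<times> 'x list \<times> 'x list \<Rightarrow> 'x list" where "pa p = fst p"
definition pg :: "'x list \<times> 'g \<times> 'x list \<times> 'x list \<Rightarrow> 'g" where "pg p = fst (snd p)"
definition pb :: "'x list \<times> 'g \<times> 'x list \<times> 'x list \<Rightarrow> 'x list" where "pb p = fst (snd (snd p))"
definition pc :: "'x list \<times> 'g \<times> 'x list \<times> 'x list \<Rightarrow> 'x list" where "pc p = snd (snd (snd p))"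
definition ps where "ps p = Some (pa p, pg p, pb p)"

lemma bis_count:
  assumes B: "compact_open_bisection G act res B"
  shows "\<exists>N. det N (gdom ` B) \<and> det N (grng act res ` B) \<and>
             card (W N (gdom ` B)) = card (W N (grng act res ` B))"
proof -
  have Bt: "B \<subseteq> tight_groupoid G act res" and Bo: "openin gtop B" and Bc: "compactin gtop B"
    and ig: "inj_on gdom B" and ir: "inj_on (grng act res) B"
    using B unfolding compact_open_bisection_def by auto
  define sl where "sl p = gm (ps p) ` cyl (pc p)" for p
  define Q where "Q p \<longleftrightarrow> pg p \<in> carrier G \<and> length (pa p) = length (pb p) \<and>
      length (pb p) \<le> length (pc p) \<and> cyl (pc p) \<subseteq> cyl (pb p) \<and> sl p \<subseteq> B" for p
  define \<U> where "\<U> = sl ` {p. Q p}"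
  have cover: "B \<subseteq> \<Union>\<U>"
  proof
    fix \<gamma> assume \<gamma>: "\<gamma> \<in> B"
    then have "\<gamma> \<in> tight_groupoid G act res" using Bt by blast
    then obtain s y where sy: "\<gamma> = gm s y" "s \<in> Seq G" "s \<noteq> None" "y \<in> sdom s"
      unfolding tight_groupoid_def by blast
    obtain a g b where s: "s = Some (a, g, b)" "g \<in> carrier G" "length a = length b"
      using sy(2,3) by (rule Seq_cases)
    have yb: "y \<in> cyl b" using sy(4) s(1) by simp
    obtain n where n: "\<forall>y'\<in>cyl (pre y n). y' \<in> sdom s \<longrightarrow> gm s y' \<in> B"
      using germ_cont[OF Bo sy(2,3,4)] \<gamma> sy(1) by blast
    define c where "c = pre y (max n (length b))"
    have bb: "b = pre y (length b)" using yb by (rule cyl_pre_eq)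
    have bc: "cyl c \<subseteq> cyl b" unfolding c_def using cyl_pre_mono[of "length b" "max n (length b)" y] bb by simp
    have cn: "cyl c \<subseteq> cyl (pre y n)" unfolding c_def using cyl_pre_mono[of n "max n (length b)" y] by simp
    define p where "p = (a, g, b, c)"
    have pp: "pa p = a" "pg p = g" "pb p = b" "pc p = c" "ps p = s"
      by (simp_all add: p_def pa_def pg_def pb_def pc_def ps_def s(1))
    have "sl p \<subseteq> B"
    proof
      fix \<gamma>' assume "\<gamma>' \<in> sl p"
      then obtain y' where y': "y' \<in> cyl c" "\<gamma>' = gm s y'" unfolding sl_def pp by blast
      have "y' \<in> cyl (pre y n)" "y' \<in> sdom s" using y'(1) cn bc s(1) by auto
      then show "\<gamma>' \<in> B" using n y'(2) by blast
    qed
    then have "Q p" unfolding Q_def pp using s bc by (simp add: c_def)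
    moreover have "\<gamma> \<in> sl p" unfolding sl_def pp sy(1) c_def by simp
    ultimately show "\<gamma> \<in> \<Union>\<U>" unfolding \<U>_def by blast
  qed
  have Uopen: "\<forall>U\<in>\<U>. openin gtop U"
  proof
    fix U assume "U \<in> \<U>"
    then obtain p where p: "Q p" "U = sl p" unfolding \<U>_def by blast
    have "ps p \<in> Seq G" "ps p \<noteq> None" "cyl (pc p) \<subseteq> sdom (ps p)"
      using p(1) unfolding Q_def ps_def by auto
    then show "openin gtop U" unfolding p(2) sl_def by (rule slice_open)
  qed
  have comp: "\<forall>\<U>. (\<forall>U\<in>\<U>. openin gtop U) \<and> B \<subseteq> \<Union>\<U> \<longrightarrow> (\<exists>\<F>. finite \<F> \<and> \<F> \<subseteq> \<U> \<and> B \<subseteq> \<Union>\<F>)"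
    using Bc unfolding compactin_def by (rule conjunct2)
  have "\<exists>\<F>. finite \<F> \<and> \<F> \<subseteq> \<U> \<and> B \<subseteq> \<Union>\<F>"
    by (rule mp[OF spec[OF comp, of \<U>]]) (rule conjI[OF Uopen cover])
  then obtain \<F> where F: "finite \<F>" "\<F> \<subseteq> \<U>" "B \<subseteq> \<Union>\<F>" by (elim exE conjE)
  obtain Ps where Ps: "Ps \<subseteq> {p. Q p}" "finite Ps" "\<F> = sl ` Ps"
    using finite_subset_image[OF F(1) F(2)[unfolded \<U>_def]] by blast
  have QPs: "\<And>p. p \<in> Ps \<Longrightarrow> Q p" using Ps(1) by blast
  define N where "N = Max (insert 0 ((\<lambda>p. length (pc p)) ` Ps))"
  have Nge: "length (pc p) \<le> N" if "p \<in> Ps" for p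
    unfolding N_def using Ps(2) that by (intro Max_ge) auto
  have P1: "ps p \<in> Seq G \<and> ps p \<noteq> None \<and> y \<in> sdom (ps p) \<and> gm (ps p) y \<in> B \<and>
      gdom (gm (ps p) y) = y \<and> grng act res (gm (ps p) y) = srng act res (ps p) y"
    if p: "p \<in> Ps" and y: "y \<in> cyl (pc p)" for p y
  proof -
    have q: "Q p" using QPs[OF p] .
    have 1: "ps p \<in> Seq G" "ps p \<noteq> None" using q unfolding Q_def ps_def by auto
    have 2: "y \<in> sdom (ps p)" using q y unfolding Q_def ps_def by auto
    have 3: "gm (ps p) y \<in> B" using q y unfolding Q_def sl_def by blast
    show ?thesis using 1 2 3 gdom_germ[OF 1 2] grng_germ[OF 1 2] by simp
  qed
  have F2: "\<exists>p\<in>Ps. \<exists>y\<in>cyl (pc p). \<gamma> = gm (ps p) y" if "\<gamma> \<in> B" for \<gamma>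
  proof -
    have "\<gamma> \<in> \<Union> (sl ` Ps)" using that F(3) Ps(3) by blast
    then show ?thesis unfolding sl_def by blast
  qed
  define D where "D = gdom ` B"
  define R where "R = grng act res ` B"
  have F3: "D = (\<Union>p\<in>Ps. cyl (pc p))"
  proof (intro equalityI subsetI)
    fix y assume "y \<in> D"
    then obtain \<gamma> where \<gamma>: "\<gamma> \<in> B" "y = gdom \<gamma>" unfolding D_def by blast
    obtain p y' where p: "p \<in> Ps" "y' \<in> cyl (pc p)" "\<gamma> = gm (ps p) y'" using F2[OF \<gamma>(1)] by blast
    have "y = y'" using P1[OF p(1,2)] \<gamma>(2) p(3) by simp
    then show "y \<in> (\<Union>p\<in>Ps. cyl (pc p))" using p by blast
  next
    fix y assume "y \<in> (\<Union>p\<in>Ps. cyl (pc p))"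
    then obtain p where p: "p \<in> Ps" "y \<in> cyl (pc p)" by blast
    then have "gm (ps p) y \<in> B" "gdom (gm (ps p) y) = y" using P1 by auto
    then show "y \<in> D" unfolding D_def by force
  qed
  have detD: "det N D"
    unfolding F3 by (rule det_Union) (auto intro!: det_cyl Nge)
  define \<phi> where "\<phi> y = grng act res (SOME \<gamma>. \<gamma> \<in> B \<and> gdom \<gamma> = y)" for y
  have F4: "\<phi> y = srng act res (ps p) y" if p: "p \<in> Ps" and y: "y \<in> cyl (pc p)" for p y
  proof -
    have g0: "gm (ps p) y \<in> B \<and> gdom (gm (ps p) y) = y" using P1[OF p y] by simp
    then have ex: "\<exists>\<gamma>. \<gamma> \<in> B \<and> gdom \<gamma> = y" by blast
    have sm: "(SOME \<gamma>. \<gamma> \<in> B \<and> gdom \<gamma> = y) \<in> B \<and> gdom (SOME \<gamma>. \<gamma> \<in> B \<and> gdom \<gamma> = y) = y"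
      using someI_ex[OF ex] .
    have eqd: "gdom (SOME \<gamma>. \<gamma> \<in> B \<and> gdom \<gamma> = y) = gdom (gm (ps p) y)" using g0 sm by simp
    have "(SOME \<gamma>. \<gamma> \<in> B \<and> gdom \<gamma> = y) = gm (ps p) y"
      using inj_onD[OF ig eqd conjunct1[OF sm] conjunct1[OF g0]] .
    then show ?thesis unfolding \<phi>_def using P1[OF p y] by simp
  qed
  have F5: "R = \<phi> ` D"
  proof (intro equalityI subsetI)
    fix z assume "z \<in> R"
    then obtain \<gamma> where \<gamma>: "\<gamma> \<in> B" "z = grng act res \<gamma>" unfolding R_def by blast
    obtain p y where p: "p \<in> Ps" "y \<in> cyl (pc p)" "\<gamma> = gm (ps p) y" using F2[OF \<gamma>(1)] by blast
    have "z = \<phi> y" using P1[OF p(1,2)] F4[OF p(1,2)] \<gamma>(2) p(3) by simp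
    moreover have "y \<in> D" using F3 p by blast
    ultimately show "z \<in> \<phi> ` D" by blast
  next
    fix z assume "z \<in> \<phi> ` D"
    then obtain y where y: "y \<in> D" "z = \<phi> y" by blast
    then obtain p where p: "p \<in> Ps" "y \<in> cyl (pc p)" using F3 by blast
    have "z = grng act res (gm (ps p) y)" using y(2) F4[OF p] P1[OF p] by simp
    moreover have "gm (ps p) y \<in> B" using P1[OF p] by simp
    ultimately show "z \<in> R" unfolding R_def by blast
  qed
  have F6: "inj_on \<phi> D"
  proof (rule inj_onI)
    fix y1 y2 assume y1: "y1 \<in> D" and y2: "y2 \<in> D" and eq: "\<phi> y1 = \<phi> y2"
    obtain p1 where p1: "p1 \<in> Ps" "y1 \<in> cyl (pc p1)" using F3 y1 by blast
    obtain p2 where p2: "p2 \<in> Ps" "y2 \<in> cyl (pc p2)" using F3 y2 by blast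
    have "grng act res (gm (ps p1) y1) = grng act res (gm (ps p2) y2)"
      using eq F4[OF p1] F4[OF p2] P1[OF p1] P1[OF p2] by simp
    moreover have "gm (ps p1) y1 \<in> B" "gm (ps p2) y2 \<in> B" using P1[OF p1] P1[OF p2] by auto
    ultimately have "gm (ps p1) y1 = gm (ps p2) y2" using inj_onD[OF ir] by simp
    then have "gdom (gm (ps p1) y1) = gdom (gm (ps p2) y2)" by simp
    then show "y1 = y2" using P1[OF p1] P1[OF p2] by simp
  qed
  have K: "pre (\<phi> y) N = pa p @ act (pg p) (drop (length (pb p)) (pre y N))"
    if p: "p \<in> Ps" and y: "y \<in> cyl (pc p)" for p y
  proof -
    have q: "Q p" using QPs[OF p] .
    have g: "pg p \<in> carrier G" and la: "length (pa p) = length (pb p)" and lb: "length (pb p) \<le> N"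
      using q Nge[OF p] unfolding Q_def by auto
    have NN: "N = length (pa p) + (N - length (pb p))" using la lb by simp
    have NN': "N = length (pb p) + (N - length (pb p))" using lb by simp
    have "pre (\<phi> y) N = pre (prepend (pa p) (om (pg p) (shift (length (pb p)) y))) (length (pa p) + (N - length (pb p)))"
      using F4[OF p y] NN by (simp add: ps_def srng_Some)
    also have "\<dots> = pa p @ act (pg p) (pre (shift (length (pb p)) y) (N - length (pb p)))"
      by (simp add: pre_prepend pre_omega g)
    also have "\<dots> = pa p @ act (pg p) (drop (length (pb p)) (pre y N))"
      using pre_shift[of "length (pb p)" y "N - length (pb p)"] lb by simp
    finally show ?thesis .
  qed
  have F7: "\<exists>p\<in>Ps. cyl w \<subseteq> cyl (pc p)" if w: "w \<in> W N D" for w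
  proof -
    have lw: "length w = N" and wD: "cyl w \<subseteq> D" using w by (auto simp: W_def)
    obtain y0 where y0: "y0 \<in> cyl w" using cyl_nonempty by blast
    then obtain p where p: "p \<in> Ps" "y0 \<in> cyl (pc p)" using wD F3 by blast
    have "cyl w \<subseteq> cyl (pc p)"
    proof
      fix y assume "y \<in> cyl w"
      then show "y \<in> cyl (pc p)" using cyl_transfer[OF y0 _ p(2)] Nge[OF p(1)] lw by simp
    qed
    then show ?thesis using p(1) by blast
  qed
  define f where "f w = pre (\<phi> (SOME y. y \<in> cyl w)) N" for w
  have F7b: "pre (\<phi> y) N = f w" if w: "w \<in> W N D" and y: "y \<in> cyl w" for w y
  proof -
    have lw: "length w = N" using w by (simp add: W_def)
    obtain p where p: "p \<in> Ps" "cyl w \<subseteq> cyl (pc p)" using F7[OF w] by blast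
    have ex: "\<exists>y. y \<in> cyl w" using cyl_nonempty by blast
    have y0: "(SOME y. y \<in> cyl w) \<in> cyl w" using someI_ex[OF ex] .
    have "pre y N = w" "pre (SOME y. y \<in> cyl w) N = w" using y y0 lw by (simp_all add: cyl_iff)
    moreover have "y \<in> cyl (pc p)" "(SOME y. y \<in> cyl w) \<in> cyl (pc p)" using p(2) y y0 by auto
    ultimately show ?thesis unfolding f_def using K[OF p(1)] by simp
  qed
  have F8: "cyl (f w) \<subseteq> \<phi> ` cyl w" if w: "w \<in> W N D" for w
  proof
    fix z assume z: "z \<in> cyl (f w)"
    have lw: "length w = N" using w by (simp add: W_def)
    obtain p where p: "p \<in> Ps" "cyl w \<subseteq> cyl (pc p)" using F7[OF w] by blast
    have q: "Q p" using QPs[OF p(1)] .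
    define a where "a = pa p"
    define g where "g = pg p"
    define b where "b = pb p"
    have g: "g \<in> carrier G" and la: "length a = length b" and lb: "length b \<le> N"
      and cb: "cyl (pc p) \<subseteq> cyl b"
      using q Nge[OF p(1)] unfolding Q_def a_def g_def b_def by auto
    obtain y0 where y0: "y0 \<in> cyl w" using cyl_nonempty by blast
    have y0p: "y0 \<in> cyl (pc p)" using p(2) y0 by auto
    have py0: "pre y0 N = w" using y0 lw by (simp add: cyl_iff)
    have fw: "f w = a @ act g (drop (length b) w)"
      using F7b[OF w y0] K[OF p(1) y0p] py0 unfolding a_def g_def b_def by simp
    have lf: "length (f w) = N" by (simp add: f_def)
    have pz: "pre z N = a @ act g (drop (length b) w)" using z lf fw by (simp add: cyl_iff)
    obtain y1 where y1: "om g y1 = shift (length a) z" using omega_surj[OF g] by blast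
    define y where "y = prepend b y1"
    have NN: "N = length b + (N - length b)" using lb by simp
    have py: "pre y N = b @ pre y1 (N - length b)"
      unfolding y_def using pre_prepend[of b y1 "N - length b"] NN by simp
    have "act g (pre y1 (N - length b)) = pre (shift (length a) z) (N - length b)"
      using pre_omega[OF g, of y1 "N - length b"] y1 by simp
    also have "\<dots> = drop (length a) (pre z N)" using pre_shift[of "length a" z "N - length b"] la lb by simp
    also have "\<dots> = act g (drop (length b) w)" using pz by simp
    finally have h1: "pre y1 (N - length b) = drop (length b) w" using act_inj[OF g] by blast
    have h2: "take (length b) w = b"
    proof -
      have "y0 \<in> cyl b" using y0 p(2) cb by blast
      then have "b = pre y0 (length b)" by (rule cyl_pre_eq)
      also have "\<dots> = take (length b) (pre y0 N)" by (rule pre_take[OF lb, symmetric])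
      also have "\<dots> = take (length b) w" using y0 lw by (simp add: cyl_iff)
      finally show ?thesis by simp
    qed
    have "pre y N = b @ drop (length b) w" using py h1 by simp
    also have "\<dots> = take (length b) w @ drop (length b) w" by (simp only: h2)
    also have "\<dots> = w" by simp
    finally have "pre y N = w" .
    then have yw: "y \<in> cyl w" using lw by (simp add: cyl_iff)
    have "\<phi> y = srng act res (ps p) y" using F4[OF p(1)] yw p(2) by blast
    also have "\<dots> = prepend a (om g y1)"
      by (simp add: ps_def srng_Some y_def a_def g_def b_def)
    also have "\<dots> = z"
    proof -
      have "pre z (length a) = pre z (length b)" using la by simp
      also have "\<dots> = take (length b) (pre z N)" by (rule pre_take[OF lb, symmetric])
      also have "\<dots> = take (length a) (pre z N)" using la by simp
      also have "\<dots> = a" using pz by simp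
      finally have "z \<in> cyl a" by (simp add: cyl_iff)
      then show ?thesis using y1 prepend_shift_cyl by simp
    qed
    finally show "z \<in> \<phi> ` cyl w" using yw by blast
  qed
  have F9a: "z \<in> R \<Longrightarrow> pre z N \<in> f ` W N D \<and> cyl (pre z N) \<subseteq> R" for z
  proof -
    assume "z \<in> R"
    then obtain y where y: "y \<in> D" "z = \<phi> y" using F5 by blast
    define w where "w = pre y N"
    have wW: "w \<in> W N D" using detD y(1) unfolding det_def W_def w_def by simp
    have yw: "y \<in> cyl w" by (simp add: w_def)
    have fw: "pre z N = f w" using F7b[OF wW yw] y(2) by simp
    have "cyl (f w) \<subseteq> \<phi> ` cyl w" using F8[OF wW] .
    also have "\<dots> \<subseteq> \<phi> ` D" using wW by (auto simp: W_def)
    finally show ?thesis using fw wW F5 by auto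
  qed
  have detR: "det N R" unfolding det_def using F9a by blast
  have F10: "W N R = f ` W N D"
  proof (intro equalityI subsetI)
    fix u assume u: "u \<in> W N R"
    obtain z where z: "z \<in> cyl u" using cyl_nonempty by blast
    have zR: "z \<in> R" and lu: "length u = N" using u z by (auto simp: W_def)
    have pzu: "pre z N = u" using z lu by (simp add: cyl_iff)
    show "u \<in> f ` W N D" using conjunct1[OF F9a[OF zR]] pzu by simp
  next
    fix u assume "u \<in> f ` W N D"
    then obtain w where w: "w \<in> W N D" "u = f w" by blast
    have "cyl u \<subseteq> \<phi> ` cyl w" using F8[OF w(1)] w(2) by simp
    also have "\<dots> \<subseteq> \<phi> ` D" using w(1) by (auto simp: W_def)
    finally show "u \<in> W N R" using F5 w(2) by (simp add: W_def f_def)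
  qed
  have F11: "inj_on f (W N D)"
  proof (rule inj_onI)
    fix w1 w2 assume w1: "w1 \<in> W N D" and w2: "w2 \<in> W N D" and eq: "f w1 = f w2"
    obtain z where z: "z \<in> cyl (f w1)" using cyl_nonempty by blast
    obtain y1 where y1: "y1 \<in> cyl w1" "z = \<phi> y1" using F8[OF w1] z by blast
    have z2: "z \<in> cyl (f w2)" using z eq by simp
    then have "z \<in> \<phi> ` cyl w2" using F8[OF w2] by (rule subsetD[rotated])
    then obtain y2 where y2: "y2 \<in> cyl w2" "z = \<phi> y2" by (rule imageE) simp
    have "y1 \<in> D" "y2 \<in> D" using w1 w2 y1 y2 by (auto simp: W_def)
    then have "y1 = y2" using inj_onD[OF F6] y1(2) y2(2) by simp
    moreover have "length w1 = N" "length w2 = N" using w1 w2 by (auto simp: W_def)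
    ultimately show "w1 = w2" using y1(1) y2(1) by (simp add: cyl_iff)
  qed
  have "card (W N R) = card (W N D)" using F10 card_image[OF F11] by simp
  then show ?thesis using detD detR unfolding D_def R_def by (intro exI[of _ N]) simp
qed

end

theorem mainTheorem17:
  fixes G :: "('g,'b) monoid_scheme"
    and act :: "'g \<Rightarrow> ('x::finite) list \<Rightarrow> 'x list"
    and res :: "'g \<Rightarrow> 'x \<Rightarrow> 'g"
  assumes "self_similar G act res"
  shows "\<exists>\<mu>. normalized_invariant_mean G act res \<mu> \<and>
             (\<forall>a::'x list. \<mu> (cyl a) = inverse (real CARD('x) ^ length a)) \<and>
             (\<forall>\<nu>. normalized_invariant_mean G act res \<nu> \<longrightarrow>
                   (\<forall>E. clopen E \<longrightarrow> \<nu> E = \<mu> E))"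
proof -
  interpret ssg G act res by (rule ssg.intro[OF assms])
  have add_det: "mu (E \<union> F) = mu E + mu F" if cE: "clopen E" and cF: "clopen F" and dj: "E \<inter> F = {}"
    for E F :: "(nat \<Rightarrow> 'x) set"
  proof -
    obtain N1 where N1: "det N1 E" using clopen_imp_det[OF cE] by blast
    obtain N2 where N2: "det N2 F" using clopen_imp_det[OF cF] by blast
    have d1: "det (max N1 N2) E" using det_mono[OF N1] by simp
    have d2: "det (max N1 N2) F" using det_mono[OF N2] by simp
    show ?thesis using mu_add[OF d1 d2 dj] .
  qed
  have nim: "normalized_invariant_mean G act res mu"
    unfolding normalized_invariant_mean_def
  proof (intro conjI allI impI)
    fix E :: "(nat \<Rightarrow> 'x) set" show "0 \<le> mu E" by (rule mu_nonneg)
  next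
    show "mu UNIV = 1" by (rule mu_UNIV)
  next
    fix B assume "compact_open_bisection G act res B"
    then obtain N where N: "det N (gdom ` B)" "det N (grng act res ` B)"
      "card (W N (gdom ` B)) = card (W N (grng act res ` B))" using bis_count by blast
    show "mu (gdom ` B) = mu (grng act res ` B)" using mu_eq[OF N(1)] mu_eq[OF N(2)] N(3) by simp
  next
    fix E F :: "(nat \<Rightarrow> 'x) set" assume "clopen E" "clopen F" "E \<inter> F = {}"
    then show "mu (E \<union> F) = mu E + mu F" by (rule add_det)
  qed
  have uniq: "\<nu> E = mu E" if nu: "normalized_invariant_mean G act res \<nu>" and E: "clopen E" for \<nu> E
  proof -
    have one: "\<nu> UNIV = 1"
      and inv: "\<And>B. compact_open_bisection G act res B \<Longrightarrow> \<nu> (gdom ` B) = \<nu> (grng act res ` B)"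
      and add: "\<And>E F. clopen E \<Longrightarrow> clopen F \<Longrightarrow> E \<inter> F = {} \<Longrightarrow> \<nu> (E \<union> F) = \<nu> E + \<nu> F"
      using nu unfolding normalized_invariant_mean_def by auto
    have ce: "clopen ({} :: (nat \<Rightarrow> 'x) set)" by (rule clopen_det[of 0]) (simp add: det_def)
    have nu0: "\<nu> {} = 0" using add[OF ce ce] by simp
    have sumlem: "\<nu> (\<Union> (cyl ` W0)) = (\<Sum>w\<in>W0. \<nu> (cyl w))"
      if "finite W0" "\<forall>w\<in>W0. length w = N" for W0 :: "'x list set" and N
      using that
    proof (induction W0 rule: finite_induct)
      case empty then show ?case using nu0 by simp
    next
      case (insert w W0)
      have disj: "cyl w \<inter> \<Union> (cyl ` W0) = {}"
      proof (rule ccontr)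
        assume "cyl w \<inter> \<Union> (cyl ` W0) \<noteq> {}"
        then obtain y v where yv: "y \<in> cyl w" "v \<in> W0" "y \<in> cyl v" by blast
        have "length w = N" "length v = N" using insert.prems yv(2) by auto
        then have "w = v" using cyl_same_length_eq[OF yv(1) yv(3)] by simp
        then show False using insert.hyps(2) \<open>v \<in> W0\<close> by simp
      qed
      have c1: "clopen (cyl w)" using insert.prems by (intro clopen_det[of N] det_cyl) simp
      have c2: "clopen (\<Union> (cyl ` W0))"
        using insert.prems by (intro clopen_det[of N] det_Union) (auto intro: det_cyl)
      have "\<nu> (\<Union> (cyl ` insert w W0)) = \<nu> (cyl w \<union> \<Union> (cyl ` W0))" by simp
      also have "\<dots> = \<nu> (cyl w) + \<nu> (\<Union> (cyl ` W0))" using add[OF c1 c2 disj] .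
      finally show ?case using insert by simp
    qed
    have same: "\<nu> (cyl a) = \<nu> (cyl b)" if "length a = length b" for a b :: "'x list"
      using inv[OF basic_bis(1)[OF that]] basic_bis(2,3)[OF that] by simp
    have cylnu: "\<nu> (cyl w) = inverse (real CARD('x) ^ length w)" for w :: "'x list"
    proof -
      define A where "A = {v :: 'x list. length v = length w}"
      have finA: "finite A" unfolding A_def using finite_lists_length_eq[of "UNIV::'x set"] by simp
      have cardA: "card A = CARD('x) ^ length w"
        unfolding A_def using card_lists_length_eq[of "UNIV::'x set" "length w"] by simp
      have U: "\<Union> (cyl ` A) = UNIV"
      proof (intro equalityI subsetI)
        fix y :: "nat \<Rightarrow> 'x"
        have "pre y (length w) \<in> A" by (simp add: A_def)
        moreover have "y \<in> cyl (pre y (length w))" by simp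
        ultimately show "y \<in> \<Union> (cyl ` A)" by (rule UN_I)
      qed simp
      have lA: "\<forall>v\<in>A. length v = length w" by (simp add: A_def)
      have "\<nu> (\<Union> (cyl ` A)) = (\<Sum>v\<in>A. \<nu> (cyl v))" by (rule sumlem[OF finA lA])
      then have "1 = (\<Sum>v\<in>A. \<nu> (cyl v))" using one U by simp
      also have "\<dots> = (\<Sum>v\<in>A. \<nu> (cyl w))" by (rule sum.cong) (auto simp: A_def intro: same)
      also have "\<dots> = real (CARD('x) ^ length w) * \<nu> (cyl w)" using cardA by simp
      finally have "real CARD('x) ^ length w * \<nu> (cyl w) = 1" by simp
      then show ?thesis by (simp add: field_simps)
    qed
    obtain N where N: "det N E" using clopen_imp_det[OF E] by blast
    have lW: "\<forall>w\<in>W N E. length w = N" by (simp add: W_def)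
    have "\<nu> E = \<nu> (\<Union> (cyl ` W N E))" using arg_cong[OF det_union_W[OF N], of \<nu>] .
    also have "\<dots> = (\<Sum>w\<in>W N E. \<nu> (cyl w))" by (rule sumlem[OF finite_W lW])
    also have "\<dots> = (\<Sum>w\<in>W N E. inverse (real CARD('x) ^ N))" by (rule sum.cong) (auto simp: W_def cylnu)
    also have "\<dots> = real (card (W N E)) / real CARD('x) ^ N" by (simp add: field_simps)
    also have "\<dots> = mu E" using mu_eq[OF N] by simp
    finally show ?thesis .
  qed
  show ?thesis
  proof (intro exI[of _ mu] conjI allI impI)
    show "normalized_invariant_mean G act res mu" by (rule nim)
    fix a :: "'x list" show "mu (cyl a) = inverse (real CARD('x) ^ length a)" by (rule mu_cyl)
  next
    fix \<nu> and E :: "(nat \<Rightarrow> 'x) set" assume "normalized_invariant_mean G act res \<nu>" "clopen E"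
    then show "\<nu> E = mu E" by (rule uniq)
  qed
qed


end
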